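(* Let $\mathcal{E}$ be an extensive category with finite limits. If the full subcategory $\mathrm{Dec}\,\mathcal{E} \to \mathcal{E}$ is detached, then it is the least detached subcategory of $\mathcal{E}$, i.e. it is contained in every detached full reflective subcategory of $\mathcal{E}$.
   Context: Extensive category: a category with finite coproducts such that $\mathcal{E}/X \times \mathcal{E}/Y \to \mathcal{E}/(X+Y)$ is an equivalence for all $X,Y$. An object $X$ is decidable if its diagonal $X\to X\times X$ is a summand (a map $X\to Z$ is a summand if some $Y\to Z$ makes $X\to Z\leftarrow Y$ a coproduct); $\mathrm{Dec}\,\mathcal{E}$ is the full subcategory of decidable objects. For an extensive category $\mathcal{E}$ with finite products, a full reflective subcategory $\mathcal{S}\to\mathcal{E}$ (with reflector $L$ and unit $\sigma$) is detached if it is closed under finite coproducts, closed under subobjects (for every $A\in\mathcal{S}$ and mono $X\to A$, the unit $X \to LX$ is an isomorphism, i.e. $X$ lies in $\mathcal{S}$ up to iso), and the left adjoint $L$ preserves finite products. *)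

theory Defs
  imports Main
begin

record ('o, 'm) cat =
  Obj :: "'o set"
  Arr :: "'m set"
  dom :: "'m \<Rightarrow> 'o"
  cod :: "'m \<Rightarrow> 'o"
  comp :: "'m \<Rightarrow> 'm \<Rightarrow> 'm"   (* comp C g f = g o f *)
  idm :: "'o \<Rightarrow> 'm"

definition hom :: "('o, 'm) cat \<Rightarrow> 'o \<Rightarrow> 'o \<Rightarrow> 'm set" where
  "hom C X Y = {f \<in> Arr C. dom C f = X \<and> cod C f = Y}"

definition category :: "('o, 'm) cat \<Rightarrow> bool" where
  "category C \<longleftrightarrow>
     (\<forall>f \<in> Arr C. dom C f \<in> Obj C \<and> cod C f \<in> Obj C) \<and>
     (\<forall>X \<in> Obj C. idm C X \<in> hom C X X) \<and>
     (\<forall>f \<in> Arr C. \<forall>g \<in> Arr C. dom C g = cod C f \<longrightarrow>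
          comp C g f \<in> hom C (dom C f) (cod C g)) \<and>
     (\<forall>f \<in> Arr C. \<forall>g \<in> Arr C. \<forall>h \<in> Arr C. dom C g = cod C f \<longrightarrow> dom C h = cod C g \<longrightarrow>
          comp C h (comp C g f) = comp C (comp C h g) f) \<and>
     (\<forall>f \<in> Arr C. comp C f (idm C (dom C f)) = f \<and> comp C (idm C (cod C f)) f = f)"

definition iso :: "('o, 'm) cat \<Rightarrow> 'm \<Rightarrow> bool" where
  "iso C f \<longleftrightarrow> f \<in> Arr C \<and>
     (\<exists>g \<in> hom C (cod C f) (dom C f).
        comp C g f = idm C (dom C f) \<and> comp C f g = idm C (cod C f))"

definition isomorphic :: "('o, 'm) cat \<Rightarrow> 'o \<Rightarrow> 'o \<Rightarrow> bool" where
  "isomorphic C X Y \<longleftrightarrow> (\<exists>f \<in> hom C X Y. iso C f)"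

definition mono :: "('o, 'm) cat \<Rightarrow> 'm \<Rightarrow> bool" where
  "mono C m \<longleftrightarrow> m \<in> Arr C \<and>
     (\<forall>Z. \<forall>g \<in> hom C Z (dom C m). \<forall>h \<in> hom C Z (dom C m).
        comp C m g = comp C m h \<longrightarrow> g = h)"

definition is_initial :: "('o, 'm) cat \<Rightarrow> 'o \<Rightarrow> bool" where
  "is_initial C I0 \<longleftrightarrow> I0 \<in> Obj C \<and> (\<forall>W \<in> Obj C. \<exists>!h. h \<in> hom C I0 W)"

definition is_terminal :: "('o, 'm) cat \<Rightarrow> 'o \<Rightarrow> bool" where
  "is_terminal C T \<longleftrightarrow> T \<in> Obj C \<and> (\<forall>W \<in> Obj C. \<exists>!h. h \<in> hom C W T)"

definition is_coproduct :: "('o, 'm) cat \<Rightarrow> 'm \<Rightarrow> 'm \<Rightarrow> bool" where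
  "is_coproduct C i j \<longleftrightarrow> i \<in> Arr C \<and> j \<in> Arr C \<and> cod C i = cod C j \<and>
     (\<forall>W \<in> Obj C. \<forall>f \<in> hom C (dom C i) W. \<forall>g \<in> hom C (dom C j) W.
        \<exists>!h. h \<in> hom C (cod C i) W \<and> comp C h i = f \<and> comp C h j = g)"

definition is_product :: "('o, 'm) cat \<Rightarrow> 'm \<Rightarrow> 'm \<Rightarrow> bool" where
  "is_product C p q \<longleftrightarrow> p \<in> Arr C \<and> q \<in> Arr C \<and> dom C p = dom C q \<and>
     (\<forall>W \<in> Obj C. \<forall>f \<in> hom C W (cod C p). \<forall>g \<in> hom C W (cod C q).
        \<exists>!h. h \<in> hom C W (dom C p) \<and> comp C p h = f \<and> comp C q h = g)"

definition is_pullback :: "('o, 'm) cat \<Rightarrow> 'm \<Rightarrow> 'm \<Rightarrow> 'm \<Rightarrow> 'm \<Rightarrow> bool" where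
  "is_pullback C f g p q \<longleftrightarrow> f \<in> Arr C \<and> g \<in> Arr C \<and> p \<in> Arr C \<and> q \<in> Arr C \<and>
     cod C f = cod C g \<and> dom C p = dom C q \<and> cod C p = dom C f \<and> cod C q = dom C g \<and>
     comp C f p = comp C g q \<and>
     (\<forall>W \<in> Obj C. \<forall>u \<in> hom C W (dom C f). \<forall>v \<in> hom C W (dom C g).
        comp C f u = comp C g v \<longrightarrow>
        (\<exists>!h. h \<in> hom C W (dom C p) \<and> comp C p h = u \<and> comp C q h = v))"

definition has_finite_coproducts :: "('o, 'm) cat \<Rightarrow> bool" where
  "has_finite_coproducts C \<longleftrightarrow> (\<exists>I0. is_initial C I0) \<and>
     (\<forall>X \<in> Obj C. \<forall>Y \<in> Obj C. \<exists>i j. is_coproduct C i j \<and> dom C i = X \<and> dom C j = Y)"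

definition has_finite_products :: "('o, 'm) cat \<Rightarrow> bool" where
  "has_finite_products C \<longleftrightarrow> (\<exists>T. is_terminal C T) \<and>
     (\<forall>X \<in> Obj C. \<forall>Y \<in> Obj C. \<exists>p q. is_product C p q \<and> cod C p = X \<and> cod C q = Y)"

text \<open>Finite limits: a terminal object and all pullbacks (standard generating set).\<close>
definition has_finite_limits :: "('o, 'm) cat \<Rightarrow> bool" where
  "has_finite_limits C \<longleftrightarrow> (\<exists>T. is_terminal C T) \<and>
     (\<forall>f \<in> Arr C. \<forall>g \<in> Arr C. cod C f = cod C g \<longrightarrow> (\<exists>p q. is_pullback C f g p q))"

text \<open>Given a coproduct  X --jX--> X+Y <--jY-- Y  and objects a : A -> X, b : B -> Y of the
  slices, and a coproduct  A --iA--> A+B <--iB-- B, the arrow c : A+B -> X+Y is the value of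
  the functor  E/X x E/Y -> E/(X+Y)  at (a,b) iff  c o iA = jX o a  and  c o iB = jY o b.\<close>
definition sum_map :: "('o, 'm) cat \<Rightarrow> 'm \<Rightarrow> 'm \<Rightarrow> 'm \<Rightarrow> 'm \<Rightarrow> 'm \<Rightarrow> 'm \<Rightarrow> 'm \<Rightarrow> bool" where
  "sum_map C jX jY iA iB a b c \<longleftrightarrow>
     c \<in> hom C (cod C iA) (cod C jX) \<and> comp C c iA = comp C jX a \<and> comp C c iB = comp C jY b"

definition sum_functor_equivalence :: "('o, 'm) cat \<Rightarrow> 'm \<Rightarrow> 'm \<Rightarrow> bool" where
  "sum_functor_equivalence C jX jY \<longleftrightarrow>
     \<comment> \<open>fully faithful\<close>
     (\<forall>a b iA iB c a' b' iA' iB' c'.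
        a \<in> hom C (dom C iA) (dom C jX) \<and> b \<in> hom C (dom C iB) (dom C jY) \<and>
        is_coproduct C iA iB \<and> sum_map C jX jY iA iB a b c \<and>
        a' \<in> hom C (dom C iA') (dom C jX) \<and> b' \<in> hom C (dom C iB') (dom C jY) \<and>
        is_coproduct C iA' iB' \<and> sum_map C jX jY iA' iB' a' b' c' \<longrightarrow>
        (\<forall>w \<in> hom C (cod C iA) (cod C iA'). comp C c' w = c \<longrightarrow>
           (\<exists>!(u, v). u \<in> hom C (dom C iA) (dom C iA') \<and> comp C a' u = a \<and>
                      v \<in> hom C (dom C iB) (dom C iB') \<and> comp C b' v = b \<and>
                      comp C w iA = comp C iA' u \<and> comp C w iB = comp C iB' v))) \<and>
     \<comment> \<open>essentially surjective\<close>
     (\<forall>z \<in> Arr C. cod C z = cod C jX \<longrightarrow>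
        (\<exists>a b iA iB c \<phi>.
           a \<in> hom C (dom C iA) (dom C jX) \<and> b \<in> hom C (dom C iB) (dom C jY) \<and>
           is_coproduct C iA iB \<and> sum_map C jX jY iA iB a b c \<and>
           \<phi> \<in> hom C (cod C iA) (dom C z) \<and> iso C \<phi> \<and> comp C z \<phi> = c))"

definition extensive :: "('o, 'm) cat \<Rightarrow> bool" where
  "extensive C \<longleftrightarrow> category C \<and> has_finite_coproducts C \<and>
     (\<forall>jX jY. is_coproduct C jX jY \<longrightarrow> sum_functor_equivalence C jX jY)"

definition summand :: "('o, 'm) cat \<Rightarrow> 'm \<Rightarrow> bool" where
  "summand C f \<longleftrightarrow> (\<exists>g. is_coproduct C f g)"

definition decidable :: "('o, 'm) cat \<Rightarrow> 'o \<Rightarrow> bool" where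
  "decidable C X \<longleftrightarrow> X \<in> Obj C \<and>
     (\<exists>p q d. is_product C p q \<and> cod C p = X \<and> cod C q = X \<and>
        d \<in> hom C X (dom C p) \<and> comp C p d = idm C X \<and> comp C q d = idm C X \<and>
        summand C d)"

text \<open>A full subcategory is given by a predicate S on objects. X lies in S up to iso.\<close>
definition in_rep :: "('o, 'm) cat \<Rightarrow> ('o \<Rightarrow> bool) \<Rightarrow> 'o \<Rightarrow> bool" where
  "in_rep C S X \<longleftrightarrow> (\<exists>A. S A \<and> isomorphic C X A)"

definition full_reflective :: "('o, 'm) cat \<Rightarrow> ('o \<Rightarrow> bool) \<Rightarrow> ('o \<Rightarrow> 'o) \<Rightarrow> ('o \<Rightarrow> 'm) \<Rightarrow> bool" where
  "full_reflective C S L \<sigma> \<longleftrightarrow>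
     (\<forall>A. S A \<longrightarrow> A \<in> Obj C) \<and>
     (\<forall>X \<in> Obj C. S (L X) \<and> \<sigma> X \<in> hom C X (L X) \<and>
        (\<forall>A. S A \<longrightarrow> (\<forall>f \<in> hom C X A. \<exists>!g. g \<in> hom C (L X) A \<and> comp C g (\<sigma> X) = f)))"

text \<open>L preserves finite products: it sends terminal objects to terminal objects, and for a
  product P with projections p, q, the arrows L p, L q (characterised by
  L p o \<sigma> P = \<sigma> X o p) form a product diagram.\<close>
definition reflector_preserves_finite_products ::
  "('o, 'm) cat \<Rightarrow> ('o \<Rightarrow> 'o) \<Rightarrow> ('o \<Rightarrow> 'm) \<Rightarrow> bool" where
  "reflector_preserves_finite_products C L \<sigma> \<longleftrightarrow>
     (\<forall>T. is_terminal C T \<longrightarrow> is_terminal C (L T)) \<and>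
     (\<forall>p q p' q'. is_product C p q \<and>
        p' \<in> hom C (L (dom C p)) (L (cod C p)) \<and> comp C p' (\<sigma> (dom C p)) = comp C (\<sigma> (cod C p)) p \<and>
        q' \<in> hom C (L (dom C q)) (L (cod C q)) \<and> comp C q' (\<sigma> (dom C q)) = comp C (\<sigma> (cod C q)) q
        \<longrightarrow> is_product C p' q')"

definition closed_under_finite_coproducts :: "('o, 'm) cat \<Rightarrow> ('o \<Rightarrow> bool) \<Rightarrow> bool" where
  "closed_under_finite_coproducts C S \<longleftrightarrow>
     (\<forall>I0. is_initial C I0 \<longrightarrow> in_rep C S I0) \<and>
     (\<forall>i j. is_coproduct C i j \<and> S (dom C i) \<and> S (dom C j) \<longrightarrow> in_rep C S (cod C i))"

definition closed_under_subobjects ::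
  "('o, 'm) cat \<Rightarrow> ('o \<Rightarrow> bool) \<Rightarrow> ('o \<Rightarrow> 'm) \<Rightarrow> bool" where
  "closed_under_subobjects C S \<sigma> \<longleftrightarrow>
     (\<forall>A m. S A \<and> mono C m \<and> cod C m = A \<longrightarrow> iso C (\<sigma> (dom C m)))"

definition detached :: "('o, 'm) cat \<Rightarrow> ('o \<Rightarrow> bool) \<Rightarrow> ('o \<Rightarrow> 'o) \<Rightarrow> ('o \<Rightarrow> 'm) \<Rightarrow> bool" where
  "detached C S L \<sigma> \<longleftrightarrow> full_reflective C S L \<sigma> \<and>
     closed_under_finite_coproducts C S \<and> closed_under_subobjects C S \<sigma> \<and>
     reflector_preserves_finite_products C L \<sigma>"

end

theory Submission
  imports Defs
begin

lemma homI: "f \<in> Arr C \<Longrightarrow> dom C f = X \<Longrightarrow> cod C f = Y \<Longrightarrow> f \<in> hom C X Y"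
  by (simp add: hom_def)

lemma homD: "f \<in> hom C X Y \<Longrightarrow> f \<in> Arr C \<and> dom C f = X \<and> cod C f = Y"
  by (simp add: hom_def)

lemma hom_obj: "category C \<Longrightarrow> f \<in> hom C X Y \<Longrightarrow> X \<in> Obj C \<and> Y \<in> Obj C"
  unfolding category_def hom_def by auto

lemma comp_in: "category C \<Longrightarrow> f \<in> hom C X Y \<Longrightarrow> g \<in> hom C Y Z \<Longrightarrow> comp C g f \<in> hom C X Z"
  unfolding category_def hom_def by auto

lemma assoc: "category C \<Longrightarrow> f \<in> hom C W X \<Longrightarrow> g \<in> hom C X Y \<Longrightarrow> h \<in> hom C Y Z \<Longrightarrow>
  comp C h (comp C g f) = comp C (comp C h g) f"
  unfolding category_def hom_def by auto

lemma id_in: "category C \<Longrightarrow> X \<in> Obj C \<Longrightarrow> idm C X \<in> hom C X X"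
  unfolding category_def by auto

lemma id_r: "category C \<Longrightarrow> f \<in> hom C X Y \<Longrightarrow> comp C f (idm C X) = f"
  unfolding category_def hom_def by auto

lemma id_l: "category C \<Longrightarrow> f \<in> hom C X Y \<Longrightarrow> comp C (idm C Y) f = f"
  unfolding category_def hom_def by auto

lemma initial_uniq: "is_initial C I0 \<Longrightarrow> W \<in> Obj C \<Longrightarrow> f \<in> hom C I0 W \<Longrightarrow> g \<in> hom C I0 W \<Longrightarrow> f = g"
  unfolding is_initial_def by blast

lemma initial_ex: "is_initial C I0 \<Longrightarrow> W \<in> Obj C \<Longrightarrow> \<exists>f. f \<in> hom C I0 W"
  unfolding is_initial_def by blast

lemma disj:
  assumes ext: "extensive C" and cp: "is_coproduct C j1 j2"
    and e: "e \<in> hom C B (dom C j1)" and f: "f \<in> hom C B (dom C j2)"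
    and eq: "comp C j1 e = comp C j2 f"
    and y1: "y1 \<in> hom C B Y" and y2: "y2 \<in> hom C B Y"
  shows "y1 = y2"
proof -
  have cat: "category C" using ext by (simp add: extensive_def)
  obtain I0 where I0: "is_initial C I0" using ext by (auto simp: extensive_def has_finite_coproducts_def)
  have I0o: "I0 \<in> Obj C" using I0 by (simp add: is_initial_def)
  have Bo: "B \<in> Obj C" and Yo: "Y \<in> Obj C" using hom_obj[OF cat y1] by auto
  have j1: "j1 \<in> hom C (dom C j1) (cod C j1)" and j2: "j2 \<in> hom C (dom C j2) (cod C j1)"
    using cp by (auto simp: is_coproduct_def hom_def)
  have d1: "dom C j1 \<in> Obj C" and d2: "dom C j2 \<in> Obj C" and K: "cod C j1 \<in> Obj C"
    using hom_obj[OF cat j1] hom_obj[OF cat j2] by auto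
  obtain i0 where i0: "i0 \<in> hom C I0 B" using initial_ex[OF I0 Bo] by blast
  obtain a0 where a0: "a0 \<in> hom C I0 (dom C j1)" using initial_ex[OF I0 d1] by blast
  obtain b0 where b0: "b0 \<in> hom C I0 (dom C j2)" using initial_ex[OF I0 d2] by blast
  have idB: "idm C B \<in> hom C B B" using id_in[OF cat Bo] .
  have cp1: "is_coproduct C (idm C B) i0"
    unfolding is_coproduct_def
  proof (intro conjI ballI)
    show "idm C B \<in> Arr C" "i0 \<in> Arr C" "cod C (idm C B) = cod C i0" using idB i0 by (auto simp: hom_def)
    fix W ff gg assume W: "W \<in> Obj C" and ff: "ff \<in> hom C (dom C (idm C B)) W" and gg: "gg \<in> hom C (dom C i0) W"
    have ff': "ff \<in> hom C B W" using ff idB by (simp add: hom_def)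
    have gg': "gg \<in> hom C I0 W" using gg i0 by (simp add: hom_def)
    show "\<exists>!h. h \<in> hom C (cod C (idm C B)) W \<and> comp C h (idm C B) = ff \<and> comp C h i0 = gg"
    proof (rule ex1I[of _ ff])
      show "ff \<in> hom C (cod C (idm C B)) W \<and> comp C ff (idm C B) = ff \<and> comp C ff i0 = gg"
        using ff' idB id_r[OF cat ff'] initial_uniq[OF I0 W comp_in[OF cat i0 ff'] gg'] by (simp add: hom_def)
      fix h assume "h \<in> hom C (cod C (idm C B)) W \<and> comp C h (idm C B) = ff \<and> comp C h i0 = gg"
      then show "h = ff" using idB id_r[OF cat] by (auto simp: hom_def)
    qed
  qed
  have cp2: "is_coproduct C i0 (idm C B)"
    unfolding is_coproduct_def
  proof (intro conjI ballI)
    show "idm C B \<in> Arr C" "i0 \<in> Arr C" "cod C i0 = cod C (idm C B)" using idB i0 by (auto simp: hom_def)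
    fix W gg ff assume W: "W \<in> Obj C" and ff: "ff \<in> hom C (dom C (idm C B)) W" and gg: "gg \<in> hom C (dom C i0) W"
    have ff': "ff \<in> hom C B W" using ff idB by (simp add: hom_def)
    have gg': "gg \<in> hom C I0 W" using gg i0 by (simp add: hom_def)
    show "\<exists>!h. h \<in> hom C (cod C i0) W \<and> comp C h i0 = gg \<and> comp C h (idm C B) = ff"
    proof (rule ex1I[of _ ff])
      show "ff \<in> hom C (cod C i0) W \<and> comp C ff i0 = gg \<and> comp C ff (idm C B) = ff"
        using ff' i0 id_r[OF cat ff'] initial_uniq[OF I0 W comp_in[OF cat i0 ff'] gg'] by (simp add: hom_def)
      fix h assume "h \<in> hom C (cod C i0) W \<and> comp C h i0 = gg \<and> comp C h (idm C B) = ff"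
      then show "h = ff" using idB i0 id_r[OF cat] by (auto simp: hom_def)
    qed
  qed
  define w where "w = comp C j1 e"
  have w: "w \<in> hom C B (cod C j1)" unfolding w_def using comp_in[OF cat e j1] .
  have sm1: "sum_map C j1 j2 (idm C B) i0 e b0 w"
    unfolding sum_map_def
    using idB i0 w id_r[OF cat w] initial_uniq[OF I0 K comp_in[OF cat i0 w] comp_in[OF cat b0 j2]]
    by (auto simp: hom_def w_def)
  have sm2: "sum_map C j1 j2 i0 (idm C B) a0 f w"
    unfolding sum_map_def
    using idB i0 w id_r[OF cat w] initial_uniq[OF I0 K comp_in[OF cat i0 w] comp_in[OF cat a0 j1]] eq
    by (auto simp: hom_def w_def)
  have sfe: "sum_functor_equivalence C j1 j2" using ext cp by (simp add: extensive_def)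
  have prem: "e \<in> hom C (dom C (idm C B)) (dom C j1) \<and> b0 \<in> hom C (dom C i0) (dom C j2) \<and>
        is_coproduct C (idm C B) i0 \<and> sum_map C j1 j2 (idm C B) i0 e b0 w \<and>
        a0 \<in> hom C (dom C i0) (dom C j1) \<and> f \<in> hom C (dom C (idm C B)) (dom C j2) \<and>
        is_coproduct C i0 (idm C B) \<and> sum_map C j1 j2 i0 (idm C B) a0 f w"
    using e f a0 b0 cp1 cp2 sm1 sm2 idB i0 by (auto simp: hom_def)
  have idB2: "idm C B \<in> hom C (cod C (idm C B)) (cod C i0)" using idB i0 by (auto simp: hom_def)
  have ff: "\<exists>!(u, v). u \<in> hom C (dom C (idm C B)) (dom C i0) \<and> comp C a0 u = e \<and>
                      v \<in> hom C (dom C i0) (dom C (idm C B)) \<and> comp C f v = b0 \<and>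
                      comp C (idm C B) (idm C B) = comp C i0 u \<and> comp C (idm C B) i0 = comp C (idm C B) v"
    using sfe[unfolded sum_functor_equivalence_def, THEN conjunct1, rule_format, OF prem idB2]
      id_r[OF cat w] by blast
  then obtain u v where "u \<in> hom C (dom C (idm C B)) (dom C i0) \<and> comp C (idm C B) (idm C B) = comp C i0 u"
    by auto
  then have u: "u \<in> hom C B I0" and uu: "idm C B = comp C i0 u"
    using idB i0 id_r[OF cat idB] by (auto simp: hom_def)
  have "y1 = comp C y1 (comp C i0 u)" using uu id_r[OF cat y1] by simp
  also have "\<dots> = comp C (comp C y1 i0) u" using assoc[OF cat u i0 y1] .
  also have "comp C y1 i0 = comp C y2 i0"
    using initial_uniq[OF I0 Yo comp_in[OF cat i0 y1] comp_in[OF cat i0 y2]] .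
  also have "comp C (comp C y2 i0) u = comp C y2 (comp C i0 u)" using assoc[OF cat u i0 y2] by simp
  also have "\<dots> = y2" using uu id_r[OF cat y2] by simp
  finally show ?thesis .
qed

lemma fr_unit: "full_reflective C S L \<sigma> \<Longrightarrow> X \<in> Obj C \<Longrightarrow> S (L X) \<and> \<sigma> X \<in> hom C X (L X)"
  unfolding full_reflective_def by blast

lemma fr_S: "full_reflective C S L \<sigma> \<Longrightarrow> S A \<Longrightarrow> A \<in> Obj C"
  unfolding full_reflective_def by blast

lemma fr_ex: "full_reflective C S L \<sigma> \<Longrightarrow> X \<in> Obj C \<Longrightarrow> S A \<Longrightarrow> f \<in> hom C X A \<Longrightarrow>
   \<exists>g. g \<in> hom C (L X) A \<and> comp C g (\<sigma> X) = f"
  unfolding full_reflective_def by blast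

lemma fr_uniq: "full_reflective C S L \<sigma> \<Longrightarrow> X \<in> Obj C \<Longrightarrow> S A \<Longrightarrow> g1 \<in> hom C (L X) A \<Longrightarrow>
   g2 \<in> hom C (L X) A \<Longrightarrow> comp C g1 (\<sigma> X) = comp C g2 (\<sigma> X) \<Longrightarrow> category C \<Longrightarrow> g1 = g2"
proof -
  assume a: "full_reflective C S L \<sigma>" "X \<in> Obj C" "S A" "g1 \<in> hom C (L X) A"
   "g2 \<in> hom C (L X) A" "comp C g1 (\<sigma> X) = comp C g2 (\<sigma> X)" "category C"
  have "\<forall>f \<in> hom C X A. \<exists>!g. g \<in> hom C (L X) A \<and> comp C g (\<sigma> X) = f"
    using a(1,2,3) unfolding full_reflective_def by blast
  moreover have "comp C g2 (\<sigma> X) \<in> hom C X A"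
    using comp_in[OF a(7) _ a(5)] fr_unit[OF a(1,2)] by blast
  ultimately have ex1: "\<exists>!g. g \<in> hom C (L X) A \<and> comp C g (\<sigma> X) = comp C g2 (\<sigma> X)" by blast
  then show ?thesis using a by blast
qed

lemma prod_ex: "is_product C p q \<Longrightarrow> W \<in> Obj C \<Longrightarrow> f \<in> hom C W (cod C p) \<Longrightarrow> g \<in> hom C W (cod C q) \<Longrightarrow>
   \<exists>h. h \<in> hom C W (dom C p) \<and> comp C p h = f \<and> comp C q h = g"
  unfolding is_product_def by blast

lemma prod_uniq: "is_product C p q \<Longrightarrow> W \<in> Obj C \<Longrightarrow> h1 \<in> hom C W (dom C p) \<Longrightarrow> h2 \<in> hom C W (dom C p) \<Longrightarrow>
   comp C p h1 = comp C p h2 \<Longrightarrow> comp C q h1 = comp C q h2 \<Longrightarrow> category C \<Longrightarrow> h1 = h2"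
proof -
  assume a: "is_product C p q" "W \<in> Obj C" "h1 \<in> hom C W (dom C p)" "h2 \<in> hom C W (dom C p)"
    "comp C p h1 = comp C p h2" "comp C q h1 = comp C q h2" "category C"
  have p: "p \<in> hom C (dom C p) (cod C p)" and q: "q \<in> hom C (dom C p) (cod C q)"
    using a(1) unfolding is_product_def hom_def by auto
  have "\<exists>!h. h \<in> hom C W (dom C p) \<and> comp C p h = comp C p h2 \<and> comp C q h = comp C q h2"
    using a(1) a(2) comp_in[OF a(7) a(4) p] comp_in[OF a(7) a(4) q] unfolding is_product_def by blast
  then show ?thesis using a by blast
qed

lemma coprod_ex: "is_coproduct C i j \<Longrightarrow> W \<in> Obj C \<Longrightarrow> f \<in> hom C (dom C i) W \<Longrightarrow> g \<in> hom C (dom C j) W \<Longrightarrow>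
   \<exists>h. h \<in> hom C (cod C i) W \<and> comp C h i = f \<and> comp C h j = g"
  unfolding is_coproduct_def by blast

lemma coprod_uniq: "is_coproduct C i j \<Longrightarrow> W \<in> Obj C \<Longrightarrow> h1 \<in> hom C (cod C i) W \<Longrightarrow> h2 \<in> hom C (cod C i) W \<Longrightarrow>
   comp C h1 i = comp C h2 i \<Longrightarrow> comp C h1 j = comp C h2 j \<Longrightarrow> category C \<Longrightarrow> h1 = h2"
proof -
  assume a: "is_coproduct C i j" "W \<in> Obj C" "h1 \<in> hom C (cod C i) W" "h2 \<in> hom C (cod C i) W"
    "comp C h1 i = comp C h2 i" "comp C h1 j = comp C h2 j" "category C"
  have i: "i \<in> hom C (dom C i) (cod C i)" and j: "j \<in> hom C (dom C j) (cod C i)"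
    using a(1) unfolding is_coproduct_def hom_def by auto
  have "\<exists>!h. h \<in> hom C (cod C i) W \<and> comp C h i = comp C h2 i \<and> comp C h j = comp C h2 j"
    using a(1) a(2) comp_in[OF a(7) i a(4)] comp_in[OF a(7) j a(4)] unfolding is_coproduct_def by blast
  then show ?thesis using a by blast
qed

theorem corollary2p10:
  fixes E :: "('o, 'm) cat"
  assumes "extensive E"
    and "has_finite_limits E"
    and "\<exists>L \<sigma>. detached E (decidable E) L \<sigma>"
  shows "\<forall>S L' \<sigma>'. detached E S L' \<sigma>' \<longrightarrow> (\<forall>X. decidable E X \<longrightarrow> in_rep E S X)"
proof (intro allI impI)
  fix S L \<sigma> X
  assume det: "detached E S L \<sigma>" and dec: "decidable E X"
  have ext: "extensive E" by fact
  have cat: "category E" using ext by (simp add: extensive_def)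
  have fr: "full_reflective E S L \<sigma>" and clc: "closed_under_finite_coproducts E S"
    and cls: "closed_under_subobjects E S \<sigma>" and pres: "reflector_preserves_finite_products E L \<sigma>"
    using det by (auto simp: detached_def)
  obtain p q dd where prod: "is_product E p q" and cp: "cod E p = X" and cq: "cod E q = X"
    and dd: "dd \<in> hom E X (dom E p)" and pdd: "comp E p dd = idm E X" and qdd: "comp E q dd = idm E X"
    and sd: "summand E dd"
    using dec unfolding decidable_def by blast
  define P where "P = dom E p"
  have dq: "dom E q = P" using prod by (simp add: is_product_def P_def)
  have p: "p \<in> hom E P X" and q: "q \<in> hom E P X" using prod cp cq dq
    by (auto simp: is_product_def hom_def P_def)
  have dd: "dd \<in> hom E X P" using dd by (simp add: P_def)
  obtain cc where cpc: "is_coproduct E dd cc" using sd by (auto simp: summand_def)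
  define C0 where "C0 = dom E cc"
  have cc: "cc \<in> hom E C0 P" using cpc dd by (auto simp: is_coproduct_def hom_def C0_def)
  have Xo: "X \<in> Obj E" and Po: "P \<in> Obj E" using hom_obj[OF cat dd] by auto
  have C0o: "C0 \<in> Obj E" using hom_obj[OF cat cc] by auto
  have SX: "S (L X)" and sX: "\<sigma> X \<in> hom E X (L X)" using fr_unit[OF fr Xo] by auto
  have SP: "S (L P)" and sP: "\<sigma> P \<in> hom E P (L P)" using fr_unit[OF fr Po] by auto
  have SC: "S (L C0)" and sC: "\<sigma> C0 \<in> hom E C0 (L C0)" using fr_unit[OF fr C0o] by auto
  have LXo: "L X \<in> Obj E" using fr_S[OF fr SX] .
  have LCo: "L C0 \<in> Obj E" using fr_S[OF fr SC] .
  obtain Lp where Lp: "Lp \<in> hom E (L P) (L X)" and Lps: "comp E Lp (\<sigma> P) = comp E (\<sigma> X) p"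
    using fr_ex[OF fr Po SX comp_in[OF cat p sX]] by blast
  obtain Lq where Lq: "Lq \<in> hom E (L P) (L X)" and Lqs: "comp E Lq (\<sigma> P) = comp E (\<sigma> X) q"
    using fr_ex[OF fr Po SX comp_in[OF cat q sX]] by blast
  have prodL: "is_product E Lp Lq"
    using pres[unfolded reflector_preserves_finite_products_def, THEN conjunct2, rule_format, of p q Lp Lq]
      prod Lp Lq Lps Lqs cp cq dq by (simp add: P_def)
  have dLp: "dom E Lp = L P" and cLp: "cod E Lp = L X" and cLq: "cod E Lq = L X"
    using Lp Lq by (auto simp: hom_def)
  obtain \<delta> where \<delta>: "\<delta> \<in> hom E (L X) (L P)" and Lpd: "comp E Lp \<delta> = idm E (L X)"
    and Lqd: "comp E Lq \<delta> = idm E (L X)"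
    using prod_ex[OF prodL LXo] id_in[OF cat LXo] dLp cLp cLq by metis
  have key1: "comp E \<delta> (\<sigma> X) = comp E (\<sigma> P) dd"
  proof (rule prod_uniq[OF prodL Xo _ _ _ _ cat])
    show "comp E \<delta> (\<sigma> X) \<in> hom E X (dom E Lp)" using comp_in[OF cat sX \<delta>] dLp by simp
    show "comp E (\<sigma> P) dd \<in> hom E X (dom E Lp)" using comp_in[OF cat dd sP] dLp by simp
    have "comp E Lp (comp E \<delta> (\<sigma> X)) = \<sigma> X"
      using assoc[OF cat sX \<delta> Lp] Lpd id_l[OF cat sX] by simp
    moreover have "comp E Lp (comp E (\<sigma> P) dd) = \<sigma> X"
      using assoc[OF cat dd sP Lp] Lps assoc[OF cat dd p sX] pdd id_r[OF cat sX] by simp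
    ultimately show "comp E Lp (comp E \<delta> (\<sigma> X)) = comp E Lp (comp E (\<sigma> P) dd)" by simp
    have "comp E Lq (comp E \<delta> (\<sigma> X)) = \<sigma> X"
      using assoc[OF cat sX \<delta> Lq] Lqd id_l[OF cat sX] by simp
    moreover have "comp E Lq (comp E (\<sigma> P) dd) = \<sigma> X"
      using assoc[OF cat dd sP Lq] Lqs assoc[OF cat dd q sX] qdd id_r[OF cat sX] by simp
    ultimately show "comp E Lq (comp E \<delta> (\<sigma> X)) = comp E Lq (comp E (\<sigma> P) dd)" by simp
  qed
  obtain j1 j2 where cpj: "is_coproduct E j1 j2" and dj1: "dom E j1 = L X" and dj2: "dom E j2 = L C0"
    using ext LXo LCo unfolding extensive_def has_finite_coproducts_def by blast
  define K where "K = cod E j1"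
  have j1: "j1 \<in> hom E (L X) K" and j2: "j2 \<in> hom E (L C0) K"
    using cpj dj1 dj2 by (auto simp: is_coproduct_def hom_def K_def)
  have Ko: "K \<in> Obj E" using hom_obj[OF cat j1] by auto
  have "in_rep E S K"
    using clc[unfolded closed_under_finite_coproducts_def, THEN conjunct2, rule_format, of j1 j2]
      cpj dj1 dj2 SX SC by (simp add: K_def)
  then obtain A \<psi> where SA: "S A" and \<psi>: "\<psi> \<in> hom E K A" and iso\<psi>: "iso E \<psi>"
    unfolding in_rep_def isomorphic_def by blast
  obtain \<psi>' where \<psi>': "\<psi>' \<in> hom E A K" and \<psi>'\<psi>: "comp E \<psi>' \<psi> = idm E K"
    using iso\<psi> \<psi> unfolding iso_def hom_def by auto
  have Ao: "A \<in> Obj E" using fr_S[OF fr SA] .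
  obtain t where t: "t \<in> hom E P K" and tdd: "comp E t dd = comp E j1 (\<sigma> X)"
      and tcc: "comp E t cc = comp E j2 (\<sigma> C0)"
    using coprod_ex[OF cpc Ko, of "comp E j1 (\<sigma> X)" "comp E j2 (\<sigma> C0)"]
      comp_in[OF cat sX j1] comp_in[OF cat sC j2] dd cc by (auto simp: hom_def C0_def)
  obtain \<theta> where \<theta>: "\<theta> \<in> hom E (L P) A" and \<theta>s: "comp E \<theta> (\<sigma> P) = comp E \<psi> t"
    using fr_ex[OF fr Po SA comp_in[OF cat t \<psi>]] by blast
  have key2: "comp E \<theta> \<delta> = comp E \<psi> j1"
  proof (rule fr_uniq[OF fr Xo SA comp_in[OF cat \<delta> \<theta>] comp_in[OF cat j1 \<psi>] _ cat])
    have "comp E (comp E \<theta> \<delta>) (\<sigma> X) = comp E \<theta> (comp E (\<sigma> P) dd)"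
      using assoc[OF cat sX \<delta> \<theta>] key1 by simp
    also have "\<dots> = comp E (comp E \<psi> t) dd" using assoc[OF cat dd sP \<theta>] \<theta>s by simp
    also have "\<dots> = comp E \<psi> (comp E j1 (\<sigma> X))" using assoc[OF cat dd t \<psi>] tdd by simp
    also have "\<dots> = comp E (comp E \<psi> j1) (\<sigma> X)" using assoc[OF cat sX j1 \<psi>] by simp
    finally show "comp E (comp E \<theta> \<delta>) (\<sigma> X) = comp E (comp E \<psi> j1) (\<sigma> X)" .
  qed
  have empty: "y1 = y2" if bm: "bm \<in> hom E B C0"
    and eqb: "comp E (\<sigma> X) (comp E p (comp E cc bm)) = comp E (\<sigma> X) (comp E q (comp E cc bm))"
    and y1: "y1 \<in> hom E B Y" and y2: "y2 \<in> hom E B Y" for B bm Y y1 y2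
  proof -
    define e where "e = comp E (\<sigma> X) (comp E p (comp E cc bm))"
    have ccb: "comp E cc bm \<in> hom E B P" using comp_in[OF cat bm cc] .
    have e: "e \<in> hom E B (L X)" unfolding e_def using comp_in[OF cat comp_in[OF cat ccb p] sX] .
    have Bo: "B \<in> Obj E" using hom_obj[OF cat bm] by auto
    have key3: "comp E (\<sigma> P) (comp E cc bm) = comp E \<delta> e"
    proof (rule prod_uniq[OF prodL Bo _ _ _ _ cat])
      show "comp E (\<sigma> P) (comp E cc bm) \<in> hom E B (dom E Lp)" using comp_in[OF cat ccb sP] dLp by simp
      show "comp E \<delta> e \<in> hom E B (dom E Lp)" using comp_in[OF cat e \<delta>] dLp by simp
      have "comp E Lp (comp E (\<sigma> P) (comp E cc bm)) = e"
        using assoc[OF cat ccb sP Lp] Lps assoc[OF cat ccb p sX] by (simp add: e_def)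
      moreover have "comp E Lp (comp E \<delta> e) = e" using assoc[OF cat e \<delta> Lp] Lpd id_l[OF cat e] by simp
      ultimately show "comp E Lp (comp E (\<sigma> P) (comp E cc bm)) = comp E Lp (comp E \<delta> e)" by simp
      have "comp E Lq (comp E (\<sigma> P) (comp E cc bm)) = e"
        using assoc[OF cat ccb sP Lq] Lqs assoc[OF cat ccb q sX] eqb by (simp add: e_def)
      moreover have "comp E Lq (comp E \<delta> e) = e" using assoc[OF cat e \<delta> Lq] Lqd id_l[OF cat e] by simp
      ultimately show "comp E Lq (comp E (\<sigma> P) (comp E cc bm)) = comp E Lq (comp E \<delta> e)" by simp
    qed
    have sCb: "comp E (\<sigma> C0) bm \<in> hom E B (L C0)" using comp_in[OF cat bm sC] .
    have "comp E \<psi> (comp E j2 (comp E (\<sigma> C0) bm)) = comp E \<psi> (comp E (comp E t cc) bm)"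
      using assoc[OF cat bm sC j2] tcc by simp
    also have "\<dots> = comp E (comp E \<psi> t) (comp E cc bm)"
      using assoc[OF cat bm cc t] assoc[OF cat ccb t \<psi>] by simp
    also have "\<dots> = comp E \<theta> (comp E \<delta> e)" using \<theta>s[symmetric] assoc[OF cat ccb sP \<theta>] key3 by simp
    also have "\<dots> = comp E \<psi> (comp E j1 e)" using assoc[OF cat e \<delta> \<theta>] key2 assoc[OF cat e j1 \<psi>] by simp
    finally have eq\<psi>: "comp E \<psi> (comp E j2 (comp E (\<sigma> C0) bm)) = comp E \<psi> (comp E j1 e)" .
    have canc: "x = comp E \<psi>' (comp E \<psi> x)" if "x \<in> hom E B K" for x
      using assoc[OF cat that \<psi> \<psi>'] \<psi>'\<psi> id_l[OF cat that] by simp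
    have "comp E j1 e = comp E j2 (comp E (\<sigma> C0) bm)"
      using canc[OF comp_in[OF cat e j1]] canc[OF comp_in[OF cat sCb j2]] eq\<psi> by simp
    then show ?thesis
      using disj[OF ext cpj _ _ _ y1 y2, of e "comp E (\<sigma> C0) bm"] e sCb dj1 dj2 by simp
  qed
  have mono: "mono E (\<sigma> X)"
    unfolding mono_def
  proof (intro conjI allI ballI impI)
    show "\<sigma> X \<in> Arr E" using sX by (simp add: hom_def)
    fix Z g h assume g0: "g \<in> hom E Z (dom E (\<sigma> X))" and h0: "h \<in> hom E Z (dom E (\<sigma> X))"
      and gh: "comp E (\<sigma> X) g = comp E (\<sigma> X) h"
    have g: "g \<in> hom E Z X" and h: "h \<in> hom E Z X" using g0 h0 sX by (auto simp: hom_def)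
    have Zo: "Z \<in> Obj E" using hom_obj[OF cat g] by auto
    obtain k where k: "k \<in> hom E Z P" and pk: "comp E p k = g" and qk: "comp E q k = h"
      using prod_ex[OF prod Zo, of g h] g h cp cq by (auto simp: P_def)
    have sfe: "sum_functor_equivalence E dd cc" using ext cpc by (simp add: extensive_def)
    obtain a b iA iB c' \<phi> where a: "a \<in> hom E (dom E iA) (dom E dd)" and b: "b \<in> hom E (dom E iB) (dom E cc)"
      and cpi: "is_coproduct E iA iB" and sm: "sum_map E dd cc iA iB a b c'"
      and \<phi>: "\<phi> \<in> hom E (cod E iA) (dom E k)" and iso\<phi>: "iso E \<phi>" and k\<phi>: "comp E k \<phi> = c'"
      using sfe[unfolded sum_functor_equivalence_def, THEN conjunct2, rule_format, of k] k dd
      by (auto simp: hom_def)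
    define Zp where "Zp = cod E iA"
    have iA: "iA \<in> hom E (dom E iA) Zp" and iB: "iB \<in> hom E (dom E iB) Zp"
      using cpi by (auto simp: is_coproduct_def hom_def Zp_def)
    have a: "a \<in> hom E (dom E iA) X" and b: "b \<in> hom E (dom E iB) C0"
      using a b dd by (auto simp: hom_def C0_def)
    have \<phi>: "\<phi> \<in> hom E Zp Z" using \<phi> k by (auto simp: hom_def Zp_def)
    have c'iA: "comp E c' iA = comp E dd a" and c'iB: "comp E c' iB = comp E cc b"
      using sm by (auto simp: sum_map_def)
    have g\<phi>: "comp E g \<phi> \<in> hom E Zp X" and h\<phi>: "comp E h \<phi> \<in> hom E Zp X"
      using comp_in[OF cat \<phi> g] comp_in[OF cat \<phi> h] .
    have k\<phi>': "comp E k \<phi> \<in> hom E Zp P" using comp_in[OF cat \<phi> k] .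
    have gA: "comp E (comp E g \<phi>) iA = comp E p (comp E c' iA)"
      using pk[symmetric] assoc[OF cat \<phi> k p] assoc[OF cat iA k\<phi>' p] k\<phi> by simp
    have hA: "comp E (comp E h \<phi>) iA = comp E q (comp E c' iA)"
      using qk[symmetric] assoc[OF cat \<phi> k q] assoc[OF cat iA k\<phi>' q] k\<phi> by simp
    have gB: "comp E (comp E g \<phi>) iB = comp E p (comp E cc b)"
      using pk[symmetric] assoc[OF cat \<phi> k p] assoc[OF cat iB k\<phi>' p] k\<phi> c'iB by simp
    have hB: "comp E (comp E h \<phi>) iB = comp E q (comp E cc b)"
      using qk[symmetric] assoc[OF cat \<phi> k q] assoc[OF cat iB k\<phi>' q] k\<phi> c'iB by simp
    have pda: "comp E p (comp E dd a) = a" using assoc[OF cat a dd p] pdd id_l[OF cat a] by simp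
    have qda: "comp E q (comp E dd a) = a" using assoc[OF cat a dd q] qdd id_l[OF cat a] by simp
    have ccb: "comp E cc b \<in> hom E (dom E iB) P" using comp_in[OF cat b cc] .
    have "comp E (\<sigma> X) (comp E p (comp E cc b)) = comp E (comp E (\<sigma> X) g) (comp E \<phi> iB)"
      using gB assoc[OF cat iB \<phi> g] assoc[OF cat comp_in[OF cat iB \<phi>] g sX] by simp
    also have "\<dots> = comp E (\<sigma> X) (comp E q (comp E cc b))"
      using hB assoc[OF cat iB \<phi> h] assoc[OF cat comp_in[OF cat iB \<phi>] h sX] gh by simp
    finally have eqb: "comp E (\<sigma> X) (comp E p (comp E cc b)) = comp E (\<sigma> X) (comp E q (comp E cc b))" .
    have "comp E p (comp E cc b) = comp E q (comp E cc b)"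
      by (rule empty[OF b eqb comp_in[OF cat ccb p] comp_in[OF cat ccb q]])
    then have eq\<phi>: "comp E g \<phi> = comp E h \<phi>"
      using coprod_uniq[OF cpi Xo _ _ _ _ cat, of "comp E g \<phi>" "comp E h \<phi>"] g\<phi> h\<phi>
        gA hA gB hB c'iA pda qda by (simp add: Zp_def)
    obtain \<phi>' where \<phi>': "\<phi>' \<in> hom E Z Zp" and \<phi>\<phi>': "comp E \<phi> \<phi>' = idm E Z"
      using iso\<phi> \<phi> unfolding iso_def hom_def by auto
    have "g = comp E (comp E g \<phi>) \<phi>'" using assoc[OF cat \<phi>' \<phi> g] \<phi>\<phi>' id_r[OF cat g] by simp
    also have "\<dots> = h" using eq\<phi> assoc[OF cat \<phi>' \<phi> h] \<phi>\<phi>' id_r[OF cat h] by simp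
    finally show "g = h" .
  qed
  have "iso E (\<sigma> X)"
    using cls[unfolded closed_under_subobjects_def, rule_format, of "L X" "\<sigma> X"] SX mono sX
    by (auto simp: hom_def)
  then show "in_rep E S X" unfolding in_rep_def isomorphic_def using SX sX by blast
qed

end
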